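(* Let $\varphi(x)=\sum_{i\ge0}\gamma_ix^i\in\mathbb{K}[[x]]$, let $r\in\mathbb{Z}$, and stipulate $\gamma_i=0$ for $i<0$. Then $\varphi\in\mathcal{F}_r$ if and only if the following hold. If $r=2k$ is even: for each $n\ge\max\{0,1-k\}$, $$\gamma_{2n}=\frac{2}{2n+r}\sum_{i=-k}^n\binom{2n+r}{2i+r}B_{2n-2i}\gamma_{2i+1}, \qquad (\ast)$$ and, if $r\le0$, then $\gamma_{1-r}=0$ (with no condition imposed on $\gamma_{-r}$), and, when $r<0$, for $0\le n\le -k-1$, $$\gamma_{2n}=\sum_{i=0}^n\frac{2}{2i+r}\binom{-2i-r}{-2n-r}B_{2n-2i}\gamma_{2i+1}. \qquad (\ast\ast)$$ If $r=2k+1$ is odd: $(\ast)$ holds for each $n\ge\max\{0,-k\}$, and, if $r<0$, $(\ast\ast)$ holds for $0\le n\le -k-1$. In particular these conditions determine all $\gamma_{2i}$ from the $\gamma_{2i+1}$, except $\gamma_{-r}$ when $r\le0$ is even, which is unconstrained.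
   Context: $\mathbb{K}\in\{\mathbb{Q},\mathbb{R},\mathbb{C}\}$. For $r\in\mathbb{Z}$, $\mathcal{F}_r$ denotes the space of $\varphi\in\mathbb{K}[[x]]$ with $\varphi(x/(x-1))=(1-x)^r\varphi(x)$. $B_n$ is the $n$th Bernoulli number, $\frac{t}{e^t-1}=\sum_{n\ge0}B_n\frac{t^n}{n!}$. *)

theory Defs
  imports "HOL-Computational_Algebra.Formal_Power_Series"
begin

definition fps_int_power :: "'a::field fps \<Rightarrow> int \<Rightarrow> 'a fps" where
  "fps_int_power p r = (if r \<ge> 0 then p ^ nat r else inverse (p ^ nat (- r)))"

definition in_F :: "int \<Rightarrow> 'a::field fps \<Rightarrow> bool" where
  "in_F r phi \<longleftrightarrow>
     fps_compose phi (fps_X * inverse (fps_X - 1)) = fps_int_power (1 - fps_X) r * phi"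

definition bernoulli_num :: "nat \<Rightarrow> 'a::field_char_0" where
  "bernoulli_num n = fact n * fps_nth (fps_X / (fps_exp 1 - 1)) n"

definition coeff_int :: "'a::zero fps \<Rightarrow> int \<Rightarrow> 'a" where
  "coeff_int phi i = (if i < 0 then 0 else fps_nth phi (nat i))"

end

theory Submission
  imports Defs
begin
unbundle fps_syntax


definition rfl :: "'a::comm_ring_1 fps \<Rightarrow> 'a fps" where
  "rfl A = Abs_fps (\<lambda>n. (-1)^n * A $ n)"

lemma rfl_nth[simp]: "rfl A $ n = (-1)^n * A $ n" by (simp add: rfl_def)

lemma neg1_pow_split: "i \<le> n \<Longrightarrow> ((-1::'a::comm_ring_1)^n) = (-1)^i * (-1)^(n-i)"
  by (metis le_add_diff_inverse power_add)

lemma rfl_mult: "rfl (A * B) = rfl A * rfl B"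
proof (rule fps_ext)
  fix n
  have "rfl (A*B) $ n = (\<Sum>i=0..n. ((-1)^i * A $ i) * ((-1)^(n-i) * B $ (n-i)))"
    unfolding rfl_nth fps_mult_nth sum_distrib_left
    by (intro sum.cong refl) (simp add: neg1_pow_split[of _ n] algebra_simps)
  then show "rfl (A*B) $ n = (rfl A * rfl B) $ n" by (simp add: fps_mult_nth)
qed

lemma rfl_add: "rfl (A + B) = rfl A + rfl B" by (rule fps_ext) (simp add: algebra_simps)
lemma rfl_diff: "rfl (A - B) = rfl A - rfl B" by (rule fps_ext) (simp add: algebra_simps)
lemma rfl_uminus: "rfl (- A) = - rfl A" by (rule fps_ext) (simp add: algebra_simps)
lemma rfl_one[simp]: "rfl 1 = 1" by (rule fps_ext) simp
lemma rfl_const[simp]: "rfl (fps_const c) = fps_const c" by (rule fps_ext) simp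
lemma rfl_X[simp]: "rfl fps_X = - fps_X" by (rule fps_ext) simp
lemma rfl_rfl[simp]: "rfl (rfl A) = A" by (rule fps_ext) (simp flip: power_mult_distrib)
lemma rfl_power: "rfl (A ^ n) = rfl A ^ n" by (induct n) (simp_all add: rfl_mult)
lemma rfl_exp: "rfl (fps_exp c) = fps_exp (- c :: 'a :: field_char_0)"
  by (rule fps_ext) (simp add: power_minus')
lemma rfl_inverse:
  fixes A :: "'a::field fps"
  assumes "A $ 0 \<noteq> 0" shows "rfl (inverse A) = inverse (rfl A)"
proof -
  have "rfl A * rfl (inverse A) = 1" using assms by (simp add: inverse_mult_eq_1' flip: rfl_mult)
  then show ?thesis using assms
    by (metis fps_inverse_unique)
qed

definition ev :: "'a::comm_ring_1 fps \<Rightarrow> 'a fps" where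
  "ev A = Abs_fps (\<lambda>n. if even n then A $ n else 0)"
definition od :: "'a::comm_ring_1 fps \<Rightarrow> 'a fps" where
  "od A = Abs_fps (\<lambda>n. if odd n then A $ n else 0)"
lemma ev_nth[simp]: "ev A $ n = (if even n then A $ n else 0)" by (simp add: ev_def)
lemma od_nth[simp]: "od A $ n = (if odd n then A $ n else 0)" by (simp add: od_def)
lemma ev_od: "A = ev A + od A" by (rule fps_ext) simp
lemma rfl_ev_od: "rfl A = ev A - od A" by (rule fps_ext) simp

subsection \<open>Bernoulli generating function\<close>

definition Ber :: "'a::field_char_0 fps" where
  "Ber = fps_X / (fps_exp 1 - 1)"

definition UU :: "'a::field_char_0 fps" where
  "UU = Abs_fps (\<lambda>n. 1 / fact (Suc n))"

lemma exp1_X_UU: "fps_exp 1 - 1 = fps_X * (UU :: 'a::field_char_0 fps)"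
proof (rule fps_ext)
  fix n show "(fps_exp 1 - 1) $ n = (fps_X * (UU :: 'a fps)) $ n"
    by (cases n) (simp_all add: UU_def fps_X_mult_nth algebra_simps)
qed

lemma UU0[simp]: "UU $ 0 = (1::'a::field_char_0)" by (simp add: UU_def)

lemma Ber_eq: "(fps_exp 1 - 1) * Ber = (fps_X :: 'a::field_char_0 fps)"
proof -
  have d: "(fps_exp 1 - 1) dvd (fps_X :: 'a fps)"
  proof
    show "(fps_X::'a fps) = (fps_exp 1 - 1) * inverse UU"
      by (simp add: exp1_X_UU mult.assoc inverse_mult_eq_1')
  qed
  show ?thesis unfolding Ber_def using d by (simp add: dvd_mult_div_cancel)
qed

lemma bernoulli_num_Ber: "bernoulli_num n = fact n * Ber $ n"
  by (simp add: bernoulli_num_def Ber_def)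

abbreviation ee :: "'a::field_char_0 fps" where "ee \<equiv> fps_exp 1"

lemma exp_neg_mult: "fps_exp (-1) * ee = (1::'a::field_char_0 fps)"
  by (metis add.left_inverse fps_exp_0 fps_exp_add_mult)

lemma exp1_ne1: "fps_exp 1 - 1 \<noteq> (0::'a::field_char_0 fps)"
proof
  assume "fps_exp 1 - 1 = (0::'a fps)"
  then have "(fps_exp 1 - 1 :: 'a fps) $ 1 = 0" by simp
  then show False by simp
qed

definition EE :: "'a::field_char_0 fps" where
  "EE = Ber + fps_const (1/2) * fps_X"

lemma rfl_Ber: "rfl Ber = Ber + (fps_X :: 'a::field_char_0 fps)"
proof -
  let ?D = "fps_exp 1 - (1::'a fps)"
  have "rfl ?D * rfl Ber = - fps_X" using Ber_eq[where 'a='a]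
    by (metis rfl_X rfl_mult)
  moreover have "rfl ?D = fps_exp (-1) - 1" by (simp add: rfl_diff rfl_exp)
  ultimately have "(fps_exp (-1) - 1) * rfl Ber = - (fps_X :: 'a fps)" by simp
  then have "ee * ((fps_exp (-1) - 1) * rfl Ber) = ee * (- fps_X :: 'a fps)" by simp
  moreover have "ee * (fps_exp (-1) - 1) = 1 - (ee :: 'a fps)"
    using exp_neg_mult[where 'a='a] by (simp add: right_diff_distrib mult.commute)
  ultimately have "(1 - ee) * rfl Ber = - (ee * fps_X :: 'a fps)"
    by (metis mult.assoc mult_minus_right)
  then have "?D * rfl Ber = ee * fps_X"
    by (metis minus_diff_eq minus_minus mult_minus_left)
  also have "ee * fps_X = ?D * fps_X + ?D * Ber" using Ber_eq[where 'a='a] by (simp add: algebra_simps)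
  finally have "?D * rfl Ber = ?D * (Ber + fps_X :: 'a fps)"
    by (simp add: algebra_simps)
  then show ?thesis using exp1_ne1[where 'a='a] by simp
qed

lemma rfl_EE: "rfl EE = (EE :: 'a::field_char_0 fps)"
proof -
  have h: "fps_const (1/2) * fps_X + fps_const (1/2) * fps_X = (fps_X :: 'a fps)"
    by (simp flip: distrib_right)
  have "rfl EE = Ber + (fps_X - fps_const (1/2) * (fps_X :: 'a fps))"
    by (simp add: EE_def rfl_add rfl_mult rfl_Ber)
  also have "fps_X - fps_const (1/2) * fps_X = fps_const (1/2) * (fps_X :: 'a fps)"
    using h by (metis add_diff_cancel_right')
  finally show ?thesis by (simp add: EE_def)
qed

lemma EE_odd: "odd n \<Longrightarrow> EE $ n = (0::'a::field_char_0)"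
proof -
  assume "odd n"
  have "rfl EE $ n = (EE :: 'a fps) $ n" by (simp add: rfl_EE)
  then show ?thesis using \<open>odd n\<close> by simp
qed

lemma EE_even: "even n \<Longrightarrow> EE $ n = (Ber $ n :: 'a::field_char_0)"
  by (auto simp: EE_def)

lemma Ber0: "Ber $ 0 = (1::'a::field_char_0)"
proof -
  have "((fps_exp 1 - 1) * Ber) $ 1 = (fps_X :: 'a fps) $ 1" by (simp only: Ber_eq)
  then show ?thesis by (simp add: fps_mult_nth_1)
qed

lemma EE_Ber_nth: "n \<noteq> 1 \<Longrightarrow> EE $ n = (Ber $ n :: 'a::field_char_0)"
  by (auto simp: EE_def)

lemma Eq_aux1: "ee * rfl A - A = (fps_exp 1 - 1) * ev A - ((fps_exp 1 - 1) + 2) * od (A :: 'a::field_char_0 fps)"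
proof -
  have "ee * rfl A - A = ee * (ev A - od A) - (ev A + od A)"
    by (metis ev_od rfl_ev_od)
  then show ?thesis by (simp add: algebra_simps)
qed

lemma Eq_aux2: "ee * rfl A + A = ((fps_exp 1 - 1) + 2) * ev A - (fps_exp 1 - 1) * od (A :: 'a::field_char_0 fps)"
proof -
  have "ee * rfl A + A = ee * (ev A - od A) + (ev A + od A)"
    by (metis ev_od rfl_ev_od)
  then show ?thesis by (simp add: algebra_simps)
qed

lemma Ber_D2: "Ber * ((fps_exp 1 - 1) + 2) = 2 * (EE :: 'a::field_char_0 fps)"
proof -
  have "Ber * ((fps_exp 1 - 1) + 2) = fps_X + 2 * (Ber :: 'a fps)"
    using Ber_eq[where 'a='a] by (metis distrib_left mult.commute)
  also have "\<dots> = 2 * EE"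
  proof -
    have h: "2 * fps_const (1/2) = (1::'a fps)" by (simp add: fps_numeral_fps_const)
    have "2 * EE = 2 * Ber + (2 * fps_const (1/2)) * (fps_X::'a fps)"
      unfolding EE_def by (simp only: distrib_left mult.assoc)
    then show ?thesis by (simp add: h)
  qed
  finally show ?thesis .
qed

lemma ring_aux1: "(b::'a::comm_ring) * (d*x - f*y) = (b*d)*x - (b*f)*y"
  by (simp add: algebra_simps)

lemma Eq1: "Ber * (ee * rfl A - A) = fps_X * ev A - 2 * EE * od (A :: 'a::field_char_0 fps)"
proof -
  have "Ber * (ee * rfl A - A) = (Ber * (fps_exp 1 - 1)) * ev A - (Ber * ((fps_exp 1 - 1) + 2)) * od A"
    unfolding Eq_aux1 ring_aux1 ..
  then show ?thesis using Ber_D2[where 'a='a] Ber_eq[where 'a='a] by (metis mult.commute)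
qed

lemma Eq2: "Ber * (ee * rfl A + A) = 2 * EE * ev A - fps_X * od (A :: 'a::field_char_0 fps)"
proof -
  have "Ber * (ee * rfl A + A) = (Ber * ((fps_exp 1 - 1) + 2)) * ev A - (Ber * (fps_exp 1 - 1)) * od A"
    unfolding Eq_aux2 ring_aux1 ..
  then show ?thesis using Ber_D2[where 'a='a] Ber_eq[where 'a='a] by (metis mult.commute)
qed



definition G :: "'a::field_char_0 \<Rightarrow> 'a fps" where
  "G a = rfl (fps_binomial a)"

lemma G_nth: "G a $ n = (-1)^n * (a gchoose n)" by (simp add: G_def)

lemma G_add: "G (a + b) = G a * G b"
  by (simp add: G_def fps_binomial_add_mult rfl_mult)

lemma G_0[simp]: "G 0 = 1" by (simp add: G_def)

lemma G_of_nat: "G (of_nat n) = (1 - fps_X :: 'a::field_char_0 fps) ^ n"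
  by (simp add: G_def fps_binomial_of_nat rfl_power rfl_add)

lemma G_inv: "G a * G (- a) = 1"
  by (simp flip: G_add)

lemma G_inverse: "inverse (G a) = G (- a)"
  by (rule fps_inverse_unique) (rule G_inv)

lemma int_power_G: "fps_int_power (1 - fps_X) r = G (of_int r :: 'a::field_char_0)"
proof (cases "r \<ge> 0")
  case True
  then have "of_int r = (of_nat (nat r) :: 'a)" by simp
  then show ?thesis using True G_of_nat[of "nat r", where 'a='a] by (simp add: fps_int_power_def)
next
  case False
  then have "of_int r = - (of_nat (nat (-r)) :: 'a)" by simp
  then show ?thesis using False
    by (simp add: fps_int_power_def G_inverse flip: G_of_nat)
qed

lemma G_power: "G a ^ n = G (of_nat n * a)"
proof (induct n)
  case (Suc n)
  have "G a ^ Suc n = G a * G (of_nat n * a)" using Suc by simp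
  also have "\<dots> = G (a + of_nat n * a)" by (simp add: G_add)
  finally show ?case by (simp add: algebra_simps)
qed simp

definition sig :: "'a::field_char_0 fps" where
  "sig = fps_X * inverse (fps_X - 1)"

lemma sig_power: "sig ^ j = (-1)^j * fps_X^j * (G (- of_nat j) :: 'a::field_char_0 fps)"
proof -
  have "inverse (fps_X - 1) = - inverse (1 - fps_X :: 'a fps)"
    by (metis fps_inverse_minus minus_diff_eq)
  also have "inverse (1 - fps_X :: 'a fps) = G (-1)"
    using G_inverse[of "1::'a"] G_of_nat[of 1, where 'a='a] by simp
  finally have "sig = - fps_X * (G (-1) :: 'a fps)" by (simp add: sig_def)
  then have "(sig::'a fps) ^ j = (- fps_X * G (-1))^j" by simp
  also have "\<dots> = (- fps_X)^j * G (-1) ^ j" by (rule power_mult_distrib)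
  also have "(- fps_X :: 'a fps)^j = (-1)^j * fps_X^j" by (rule power_minus)
  finally have "(sig::'a fps) ^ j = (-1)^j * fps_X^j * G (-1) ^ j" by (simp only: mult.assoc)
  then show ?thesis by (simp add: G_power)
qed

lemma inF_alt: "in_F r phi \<longleftrightarrow> G (- of_int r) * (phi oo sig) = (phi :: 'a::field_char_0 fps)"
proof -
  have "in_F r phi \<longleftrightarrow> phi oo sig = G (of_int r) * phi"
    by (simp add: in_F_def int_power_G sig_def)
  also have "\<dots> \<longleftrightarrow> G (- of_int r) * (phi oo sig) = phi"
  proof
    assume "phi oo sig = G (of_int r) * phi"
    then show "G (- of_int r) * (phi oo sig) = phi"
      using G_inv[of "- of_int r :: 'a"] by (simp add: mult.assoc[symmetric])
  next
    assume "G (- of_int r) * (phi oo sig) = phi"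
    then show "phi oo sig = G (of_int r) * phi"
    proof -
      assume a: "G (- of_int r) * (phi oo sig) = phi"
      have "phi oo sig = (G (of_int r) * G (- of_int r)) * (phi oo sig)"
        using G_inv[of "of_int r :: 'a"] by simp
      also have "\<dots> = G (of_int r) * phi" using a by (simp only: mult.assoc)
      finally show ?thesis .
    qed
  qed
  finally show ?thesis .
qed

lemma G_sig_power_nth:
  fixes c :: "'a::field_char_0"
  shows "(G c * sig ^ j) $ m = (if m < j then 0 else (-1)^m * ((c - of_nat j) gchoose (m - j)))"
proof -
  have "G c * (sig::'a fps) ^ j = (-1)^j * (fps_X^j * (G c * G (- of_nat j)))"
    by (simp add: sig_power mult_ac)
  also have "G c * G (- of_nat j) = G (c - of_nat j)" by (simp add: G_add[symmetric])
  finally have "G c * (sig::'a fps) ^ j = (-1)^j * (fps_X^j * G (c - of_nat j))" .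
  moreover have "((-1)^j * F) $ m = (-1)^j * F $ m" for F :: "'a fps"
    by (induct j) simp_all
  ultimately show ?thesis
    by (auto simp: fps_X_power_mult_nth G_nth neg1_pow_split[of j m])
qed

lemma sig_power_nth_low: "m < j \<Longrightarrow> (sig ^ j) $ m = (0::'a::field_char_0)"
  using G_sig_power_nth[of 0 j m] by simp

lemma inF_coeff:
  "in_F r phi \<longleftrightarrow> (\<forall>n. phi $ n = (-1)^n * (\<Sum>j=0..n. ((of_int (-r) - of_nat j) gchoose (n-j)) * phi $ j))"
  for phi :: "'a::field_char_0 fps"
proof -
  let ?c = "- of_int r :: 'a"
  have key: "(G ?c * (phi oo sig)) $ n = (-1)^n * (\<Sum>j=0..n. ((of_int (-r) - of_nat j) gchoose (n-j)) * phi $ j)" for n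
  proof -
    have "(G ?c * (phi oo sig)) $ n = (\<Sum>i=0..n. G ?c $ i * (\<Sum>j=0..n. phi $ j * (sig^j) $ (n-i)))"
    proof -
      have "(\<Sum>j=0..n-i. phi $ j * (sig^j) $ (n-i)) = (\<Sum>j=0..n. phi $ j * (sig^j) $ (n-i))" if "i \<le> n" for i
        by (rule sum.mono_neutral_left) (auto simp: sig_power_nth_low)
      then show ?thesis by (simp add: fps_mult_nth fps_compose_nth)
    qed
    also have "\<dots> = (\<Sum>j=0..n. phi $ j * (\<Sum>i=0..n. G ?c $ i * (sig^j) $ (n-i)))"
    proof -
      have "(\<Sum>i=0..n. G ?c $ i * (\<Sum>j=0..n. phi $ j * (sig^j) $ (n-i)))
          = (\<Sum>i=0..n. \<Sum>j=0..n. phi $ j * (G ?c $ i * (sig^j) $ (n-i)))"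
        by (simp add: sum_distrib_left mult.left_commute)
      also have "\<dots> = (\<Sum>j=0..n. \<Sum>i=0..n. phi $ j * (G ?c $ i * (sig^j) $ (n-i)))"
        by (rule sum.swap)
      finally show ?thesis by (simp add: sum_distrib_left)
    qed
    also have "\<dots> = (\<Sum>j=0..n. phi $ j * (G ?c * sig^j) $ n)"
      by (simp add: fps_mult_nth)
    also have "\<dots> = (\<Sum>j=0..n. phi $ j * ((-1)^n * ((?c - of_nat j) gchoose (n - j))))"
      by (intro sum.cong refl) (simp add: G_sig_power_nth)
    finally show ?thesis by (simp add: sum_distrib_left algebra_simps)
  qed
  show ?thesis unfolding inF_alt fps_eq_iff key by (auto simp: eq_commute)
qed



definition EQ :: "int \<Rightarrow> 'a::field_char_0 fps \<Rightarrow> nat \<Rightarrow> bool" where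
  "EQ r phi n \<longleftrightarrow> phi $ n = (-1)^n * (\<Sum>j=0..n. ((of_int (-r) - of_nat j) gchoose (n-j)) * phi $ j)"

lemma inF_EQ: "in_F r phi \<longleftrightarrow> (\<forall>n. EQ r phi n)"
  by (simp add: inF_coeff EQ_def)

lemma neg1_sq: "((-1::'a::comm_ring_1)^k) * (-1)^k = 1"
  by (simp flip: power_mult_distrib)

lemma EQ_tail:
  fixes phi :: "'a::field_char_0 fps"
  assumes "int n \<ge> 1 - r"
  shows "EQ r phi n \<longleftrightarrow> phi $ n = (\<Sum>j=0..n. (-1)^j * of_nat (nat (int n + r - 1) choose (n-j)) * phi $ j)"
proof -
  let ?N = "nat (int n + r - 1)"
  have NN: "(of_nat ?N :: 'a) = of_int (int n + r - 1)"
    using assms by (metis nat_0_le of_int_of_nat_eq add_diff_cancel_left' diff_ge_0_iff_ge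
        diff_diff_eq2 le_diff_eq)
  have t: "(-1)^n * ((of_int (-r) - of_nat j) gchoose (n-j)) = (-1)^j * (of_nat (?N choose (n-j)) :: 'a)"
    if "j \<le> n" for j
  proof -
    have e: "(of_int (-r) - of_nat j :: 'a) = - (of_int r + of_nat j)" by simp
    have "((of_int (-r) - of_nat j) gchoose (n-j))
        = (-1)^(n-j) * ((of_int r + of_nat j + of_nat (n-j) - 1) gchoose (n-j) :: 'a)"
      unfolding e by (rule gbinomial_minus)
    also have "of_int r + of_nat j + of_nat (n-j) - 1 = (of_nat ?N :: 'a)"
      using that by (simp add: NN of_nat_diff)
    also have "(of_nat ?N gchoose (n-j)) = (of_nat (?N choose (n-j)) :: 'a)"
      by (simp add: binomial_gbinomial)
    finally have "(-1)^n * ((of_int (-r) - of_nat j) gchoose (n-j))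
        = ((-1)^j * ((-1)^(n-j) * (-1)^(n-j))) * (of_nat (?N choose (n-j)) :: 'a)"
      using that by (simp add: neg1_pow_split[of j n] mult_ac)
    then show ?thesis by (simp only: neg1_sq mult_1_right)
  qed
  have "(-1)^n * (\<Sum>j=0..n. ((of_int (-r) - of_nat j) gchoose (n-j)) * phi $ j)
      = (\<Sum>j=0..n. ((-1)^n * ((of_int (-r) - of_nat j) gchoose (n-j))) * phi $ j)"
    by (simp add: sum_distrib_left mult.assoc)
  also have "\<dots> = (\<Sum>j=0..n. (-1)^j * of_nat (?N choose (n-j)) * phi $ j)"
    by (intro sum.cong refl) (metis atLeastAtMost_iff t)
  finally show ?thesis by (simp add: EQ_def)
qed

definition sg :: "int \<Rightarrow> 'a::field_char_0" where
  "sg r = (if even r then -1 else 1)"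

lemma sg_sq: "sg r * sg r = (1::'a::field_char_0)" by (simp add: sg_def)
lemma sg_nz: "sg r \<noteq> (0::'a::field_char_0)" by (simp add: sg_def)

lemma sign_shift:
  assumes "int a - int b = r - 1"
  shows "((-1::'a::field_char_0)^a) = sg r * (-1)^b"
proof -
  have "even a \<longleftrightarrow> (even b \<longleftrightarrow> odd r)"
  proof -
    have "even (int a) \<longleftrightarrow> (even (int b) \<longleftrightarrow> odd r)" using assms by presburger
    then show ?thesis by simp
  qed
  then show ?thesis by (auto simp: sg_def minus_one_power_iff)
qed

definition Bt :: "int \<Rightarrow> 'a::field_char_0 fps \<Rightarrow> 'a fps" where
  "Bt r phi = Abs_fps (\<lambda>m. coeff_int phi (int m + 1 - r) / fact m)"

lemma Bt_nth: "Bt r phi $ m = coeff_int phi (int m + 1 - r) / fact m"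
  by (simp add: Bt_def)

lemma Bt_rfl_nth:
  "fact N * (ee * rfl (Bt r phi)) $ N
     = (\<Sum>m=0..N. (-1)^m * of_nat (N choose m) * coeff_int phi (int m + 1 - r))"
proof -
  have "(ee * rfl (Bt r phi)) $ N = (\<Sum>m=0..N. rfl (Bt r phi) $ m * ee $ (N - m))"
    by (simp add: fps_mult_nth mult.commute[of ee])
  then have "fact N * (ee * rfl (Bt r phi)) $ N
      = (\<Sum>m=0..N. fact N * (rfl (Bt r phi) $ m * ee $ (N - m)))"
    by (simp add: sum_distrib_left)
  also have "\<dots> = (\<Sum>m=0..N. (-1)^m * of_nat (N choose m) * coeff_int phi (int m + 1 - r))"
  proof (intro sum.cong refl)
    fix m assume "m \<in> {0..N}"
    then have mN: "m \<le> N" by simp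
    show "fact N * (rfl (Bt r phi) $ m * ee $ (N - m))
        = (-1)^m * of_nat (N choose m) * coeff_int phi (int m + 1 - r)"
      using mN by (simp add: Bt_nth binomial_fact)
  qed
  finally show ?thesis .
qed

lemma coeff_int_neg: "i < 0 \<Longrightarrow> coeff_int phi i = 0"
  by (simp add: coeff_int_def)

lemma coeff_int_nat: "coeff_int phi (int n) = phi $ n"
  by (simp add: coeff_int_def)

lemma tail_sum_identity:
  fixes phi :: "'a::field_char_0 fps"
  assumes n: "int n' = int N + 1 - r"
  shows "(\<Sum>m=0..N. (-1)^m * of_nat (N choose m) * coeff_int phi (int m + 1 - r))
       = sg r * (\<Sum>j=0..n'. (-1)^j * of_nat (N choose (n'-j)) * phi $ j)"
proof -
  let ?g = "coeff_int phi"
  let ?T = "\<lambda>d. of_nat (N choose d) * ?g (int n' - int d)"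
  have L: "(\<Sum>m=0..N. (-1)^m * of_nat (N choose m) * ?g (int m + 1 - r))
      = (\<Sum>d=0..N+n'. (-1)^(N-d) * ?T d)"
  proof -
    have "(\<Sum>m=0..N. (-1)^m * of_nat (N choose m) * ?g (int m + 1 - r))
        = (\<Sum>d=0..N. (-1)^(N-d) * of_nat (N choose (N-d)) * ?g (int (N-d) + 1 - r))"
      by (subst sum.atLeastAtMost_rev) simp
    also have "\<dots> = (\<Sum>d=0..N. (-1)^(N-d) * ?T d)"
      by (intro sum.cong refl) (auto simp: binomial_symmetric[symmetric] of_nat_diff n mult.assoc intro!: arg_cong[where f="coeff_int phi"])
    also have "\<dots> = (\<Sum>d=0..N+n'. (-1)^(N-d) * ?T d)"
      by (rule sum.mono_neutral_left) auto
    finally show ?thesis .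
  qed
  have R: "(\<Sum>j=0..n'. (-1)^j * of_nat (N choose (n'-j)) * phi $ j)
      = (\<Sum>d=0..N+n'. (-1)^(n'-d) * ?T d)"
  proof -
    have "(\<Sum>j=0..n'. (-1)^j * of_nat (N choose (n'-j)) * phi $ j)
        = (\<Sum>d=0..n'. (-1)^(n'-d) * of_nat (N choose (n'-(n'-d))) * phi $ (n'-d))"
      by (subst sum.atLeastAtMost_rev) simp
    also have "\<dots> = (\<Sum>d=0..n'. (-1)^(n'-d) * ?T d)"
    proof (intro sum.cong refl)
      fix d assume "d \<in> {0..n'}"
      then have "d \<le> n'" by simp
      then have "phi $ (n'-d) = ?g (int n' - int d)" by (metis coeff_int_nat of_nat_diff)
      then show "(-1)^(n'-d) * of_nat (N choose (n'-(n'-d))) * phi $ (n'-d) = (-1)^(n'-d) * ?T d"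
        using \<open>d \<le> n'\<close> by (simp add: mult.assoc)
    qed
    also have "\<dots> = (\<Sum>d=0..N+n'. (-1)^(n'-d) * ?T d)"
      by (rule sum.mono_neutral_left) (auto simp: coeff_int_neg)
    finally show ?thesis .
  qed
  have "(\<Sum>d=0..N+n'. (-1)^(N-d) * ?T d) = (\<Sum>d=0..N+n'. sg r * ((-1)^(n'-d) * ?T d))"
  proof (intro sum.cong refl)
    fix d
    show "(-1)^(N-d) * ?T d = sg r * ((-1)^(n'-d) * ?T d)"
    proof (cases "d \<le> N \<and> d \<le> n'")
      case True
      then have "int (N-d) - int (n'-d) = r - 1" using n by (simp add: of_nat_diff)
      then show ?thesis by (simp add: sign_shift[of "N-d" "n'-d" r])
    next
      case False
      then have "?T d = 0" by (auto simp: coeff_int_neg)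
      then show ?thesis by (simp only: mult_zero_right)
    qed
  qed
  then show ?thesis unfolding L R by (simp add: sum_distrib_left)
qed

lemma tail_N:
  fixes phi :: "'a::field_char_0 fps"
  shows "(ee * rfl (Bt r phi)) $ N = sg r * Bt r phi $ N
     \<longleftrightarrow> (int N + 1 - r \<ge> 0 \<longrightarrow> EQ r phi (nat (int N + 1 - r)))"
proof -
  let ?g = "coeff_int phi"
  let ?SL = "(\<Sum>m=0..N. (-1)^m * of_nat (N choose m) * ?g (int m + 1 - r))"
  have fnz: "(fact N :: 'a) \<noteq> 0" by simp
  have "(ee * rfl (Bt r phi)) $ N = sg r * Bt r phi $ N
      \<longleftrightarrow> fact N * (ee * rfl (Bt r phi)) $ N = fact N * (sg r * Bt r phi $ N)"
    using fnz by simp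
  also have "\<dots> \<longleftrightarrow> ?SL = sg r * ?g (int N + 1 - r)"
    unfolding Bt_rfl_nth by (simp add: Bt_nth)
  finally have iff1: "(ee * rfl (Bt r phi)) $ N = sg r * Bt r phi $ N \<longleftrightarrow> ?SL = sg r * ?g (int N + 1 - r)" .
  show ?thesis
  proof (cases "int N + 1 - r \<ge> 0")
    case False
    then have "?SL = 0" by (intro sum.neutral) (auto simp: coeff_int_neg)
    moreover have "?g (int N + 1 - r) = 0" using False by (simp add: coeff_int_neg)
    ultimately show ?thesis using iff1 False by simp
  next
    case True
    define n' where "n' = nat (int N + 1 - r)"
    have n: "int n' = int N + 1 - r" using True by (simp add: n'_def)
    have N: "nat (int n' + r - 1) = N" using n by simp
    have e: "EQ r phi n' \<longleftrightarrow> phi $ n' = (\<Sum>j=0..n'. (-1)^j * of_nat (N choose (n'-j)) * phi $ j)"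
      using EQ_tail[of r n' phi] n N by simp
    have "?SL = sg r * (\<Sum>j=0..n'. (-1)^j * of_nat (N choose (n'-j)) * phi $ j)"
      by (rule tail_sum_identity[OF n])
    moreover have "?g (int N + 1 - r) = phi $ n'" by (metis n coeff_int_nat)
    ultimately show ?thesis using iff1 e True sg_nz[where 'a='a, of r]
      by (auto simp: n'_def[symmetric])
  qed
qed

lemma tail_all:
  fixes phi :: "'a::field_char_0 fps"
  shows "(\<forall>n. int n \<ge> 1 - r \<longrightarrow> EQ r phi n) \<longleftrightarrow> ee * rfl (Bt r phi) = fps_const (sg r) * Bt r phi"
proof -
  have "(ee * rfl (Bt r phi) = fps_const (sg r) * Bt r phi)
      \<longleftrightarrow> (\<forall>N. int N + 1 - r \<ge> 0 \<longrightarrow> EQ r phi (nat (int N + 1 - r)))"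
    by (simp add: fps_eq_iff tail_N)
  also have "\<dots> \<longleftrightarrow> (\<forall>n. int n \<ge> 1 - r \<longrightarrow> EQ r phi n)"
  proof
    assume h: "\<forall>N. int N + 1 - r \<ge> 0 \<longrightarrow> EQ r phi (nat (int N + 1 - r))"
    show "\<forall>n. int n \<ge> 1 - r \<longrightarrow> EQ r phi n"
    proof (intro allI impI)
      fix n assume "int n \<ge> 1 - r"
      then have "int (nat (int n + r - 1)) + 1 - r = int n" by simp
      then show "EQ r phi n" using h[rule_format, of "nat (int n + r - 1)"] by simp
    qed
  next
    assume h: "\<forall>n. int n \<ge> 1 - r \<longrightarrow> EQ r phi n"
    show "\<forall>N. int N + 1 - r \<ge> 0 \<longrightarrow> EQ r phi (nat (int N + 1 - r))"
      using h by auto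
  qed
  finally show ?thesis by simp
qed

definition sel :: "(nat \<Rightarrow> bool) \<Rightarrow> 'a::comm_ring_1 fps \<Rightarrow> 'a fps" where
  "sel P F = Abs_fps (\<lambda>n. if P n then F $ n else 0)"

lemma sel_nth[simp]: "sel P F $ n = (if P n then F $ n else 0)" by (simp add: sel_def)

lemma Ber_nz: "Ber \<noteq> (0::'a::field_char_0 fps)"
proof
  assume "Ber = (0::'a fps)"
  then have "Ber $ 0 = (0::'a)" by simp
  then show False by (simp add: Ber0)
qed

lemma two_EE_nth: "(2 * EE * F) $ M = 2 * (\<Sum>j=0..M. EE $ (M - j) * F $ j)"
  for F :: "'a::field_char_0 fps"
proof -
  have "(2 * EE * F) $ M = (fps_const 2 * (F * EE)) $ M"
    by (simp add: fps_numeral_fps_const mult_ac)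
  also have "\<dots> = 2 * (\<Sum>j=0..M. F $ j * EE $ (M - j))"
    unfolding fps_mult_left_const_nth by (simp only: fps_mult_nth)
  finally show ?thesis by (simp add: mult.commute)
qed

lemma tail_fps_parts:
  fixes phi :: "'a::field_char_0 fps" and r :: int
  defines "P \<equiv> (\<lambda>n::nat. even (int n - r))"
  shows "ee * rfl (Bt r phi) = fps_const (sg r) * Bt r phi
     \<longleftrightarrow> fps_X * sel (\<lambda>n. \<not> P n) (Bt r phi) = 2 * EE * sel P (Bt r phi)"
proof -
  let ?B = "Bt r phi"
  show ?thesis
  proof (cases "even r")
    case True
    then have e1: "ev ?B = sel P ?B" and e2: "od ?B = sel (\<lambda>n. \<not> P n) ?B"
      by (auto simp: P_def fps_eq_iff)
    have "ee * rfl ?B = fps_const (sg r) * ?B \<longleftrightarrow> ee * rfl ?B + ?B = 0"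
    proof -
      have "fps_const (sg r) * ?B = - ?B" using True by (simp add: sg_def fps_eq_iff)
      then show ?thesis by (metis eq_neg_iff_add_eq_0)
    qed
    also have "\<dots> \<longleftrightarrow> Ber * (ee * rfl ?B + ?B) = 0" using Ber_nz[where 'a='a] by simp
    also have "\<dots> \<longleftrightarrow> 2 * EE * ev ?B - fps_X * od ?B = 0" by (simp only: Eq2)
    finally show ?thesis unfolding e1 e2 right_minus_eq by metis
  next
    case False
    then have e1: "od ?B = sel P ?B" and e2: "ev ?B = sel (\<lambda>n. \<not> P n) ?B"
      by (auto simp: P_def fps_eq_iff)
    have "ee * rfl ?B = fps_const (sg r) * ?B \<longleftrightarrow> ee * rfl ?B - ?B = 0"
      using False by (simp add: sg_def)
    also have "\<dots> \<longleftrightarrow> Ber * (ee * rfl ?B - ?B) = 0" using Ber_nz[where 'a='a] by simp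
    also have "\<dots> \<longleftrightarrow> fps_X * ev ?B - 2 * EE * od ?B = 0" by (simp only: Eq1)
    finally show ?thesis unfolding e1 e2 right_minus_eq .
  qed
qed

definition TE :: "int \<Rightarrow> 'a::field_char_0 fps \<Rightarrow> nat \<Rightarrow> bool" where
  "TE r phi M \<longleftrightarrow> of_nat M * coeff_int phi (int M - r) =
     2 * (\<Sum>j=0..M. if even (int j - r) then of_nat (M choose j) * bernoulli_num (M - j)
            * coeff_int phi (int j + 1 - r) else 0)"

lemma parts_TE:
  fixes phi :: "'a::field_char_0 fps" and r :: int
  defines "P \<equiv> (\<lambda>n::nat. even (int n - r))"
  shows "fps_X * sel (\<lambda>n. \<not> P n) (Bt r phi) = 2 * EE * sel P (Bt r phi)
     \<longleftrightarrow> (\<forall>M. even (int M - r) \<longrightarrow> TE r phi M)"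
proof -
  let ?B = "Bt r phi"
  let ?g = "coeff_int phi"
  let ?RS = "\<lambda>M. 2 * (\<Sum>j=0..M. if even (int j - r) then of_nat (M choose j) * bernoulli_num (M - j)
            * ?g (int j + 1 - r) else 0)"
  have L: "fact M * (fps_X * sel (\<lambda>n. \<not> P n) ?B) $ M
      = (if even (int M - r) then of_nat M * ?g (int M - r) else (0::'a))" for M
  proof (cases M)
    case 0 then show ?thesis by simp
  next
    case (Suc m)
    have "fact (Suc m) * (?g (int m + 1 - r) / fact m) = of_nat (Suc m) * (?g (int m + 1 - r) :: 'a)"
      by (simp add: field_simps)
    moreover have "?g (1 + int m - r) = ?g (int m + 1 - r)" by (simp add: add.commute)
    ultimately show ?thesis using Suc by (auto simp: P_def Bt_nth)
  qed
  have R: "fact M * (2 * EE * sel P ?B) $ M = (if even (int M - r) then ?RS M else (0::'a))" for M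
  proof -
    have "fact M * (2 * EE * sel P ?B) $ M
        = 2 * (\<Sum>j=0..M. fact M * (EE $ (M - j) * sel P ?B $ j))"
      unfolding two_EE_nth by (simp add: sum_distrib_left mult_ac)
    also have "\<dots> = (if even (int M - r) then ?RS M else 0)"
    proof (cases "even (int M - r)")
      case True
      have "(\<Sum>j=0..M. fact M * (EE $ (M - j) * sel P ?B $ j))
         = (\<Sum>j=0..M. if even (int j - r) then of_nat (M choose j) * bernoulli_num (M - j)
            * ?g (int j + 1 - r) else 0)"
      proof (intro sum.cong refl)
        fix j assume "j \<in> {0..M}"
        then have jM: "j \<le> M" by simp
        show "fact M * (EE $ (M - j) * sel P ?B $ j) = (if even (int j - r) then of_nat (M choose j) * bernoulli_num (M - j)
            * ?g (int j + 1 - r) else 0)"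
        proof (cases "even (int j - r)")
          case True
          have "int (M - j) = (int M - r) - (int j - r)" using jM by simp
          then have "even (int (M - j))" using True \<open>even (int M - r)\<close> by simp
          then have "even (M - j)" by simp
          then have "EE $ (M - j) = (Ber $ (M - j) :: 'a)" by (rule EE_even)
          then show ?thesis using True jM
            by (simp add: P_def Bt_nth bernoulli_num_Ber binomial_fact field_simps)
        qed (simp add: P_def)
      qed
      then show ?thesis using True by simp
    next
      case False
      have "(\<Sum>j=0..M. fact M * (EE $ (M - j) * sel P ?B $ j)) = 0"
      proof (intro sum.neutral ballI)
        fix j assume "j \<in> {0..M}"
        then have jM: "j \<le> M" by simp
        show "fact M * (EE $ (M - j) * sel P ?B $ j) = 0"
        proof (cases "P j")
          case True
          have "int (M - j) = (int M - r) - (int j - r)" using jM by simp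
          then have "odd (int (M - j))" using True False unfolding P_def by simp
          then have "odd (M - j)" by simp
          then show ?thesis by (simp add: EE_odd)
        qed simp
      qed
      then show ?thesis using False by simp
    qed
    finally show ?thesis .
  qed
  have "fps_X * sel (\<lambda>n. \<not> P n) ?B = 2 * EE * sel P ?B
      \<longleftrightarrow> (\<forall>M. fact M * (fps_X * sel (\<lambda>n. \<not> P n) ?B) $ M = fact M * (2 * EE * sel P ?B) $ M)"
    by (simp add: fps_eq_iff)
  also have "\<dots> \<longleftrightarrow> (\<forall>M. even (int M - r) \<longrightarrow> TE r phi M)"
    unfolding L R TE_def by auto
  finally show ?thesis .
qed



lemma low_mult:
  fixes U Z :: "'a::comm_ring_1 fps"
  assumes "\<forall>m\<le>L. Z $ m = 0"
  shows "\<forall>m\<le>L. (U * Z) $ m = 0"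
  using assms by (auto simp: fps_mult_nth intro!: sum.neutral)

lemma low_unit:
  fixes U Z :: "'a::field fps"
  assumes "U $ 0 \<noteq> 0"
  shows "(\<forall>m\<le>L. (U * Z) $ m = 0) \<longleftrightarrow> (\<forall>m\<le>L. Z $ m = 0)"
proof
  assume "\<forall>m\<le>L. (U * Z) $ m = 0"
  then have "\<forall>m\<le>L. (inverse U * (U * Z)) $ m = 0" by (rule low_mult)
  moreover have "inverse U * (U * Z) = Z"
    using assms by (simp add: mult.assoc[symmetric] inverse_mult_eq_1)
  ultimately show "\<forall>m\<le>L. Z $ m = 0" by simp
qed (rule low_mult)

definition Wp :: "nat \<Rightarrow> 'a::field_char_0 fps \<Rightarrow> 'a fps" where
  "Wp L phi = Abs_fps (\<lambda>j. if j \<le> L then fact (L - j) * phi $ j else 0)"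

lemma Wp_nth: "Wp L phi $ j = (if j \<le> L then fact (L - j) * phi $ j else 0)"
  by (simp add: Wp_def)

lemma EQ_poly:
  fixes phi :: "'a::field_char_0 fps"
  assumes "r = - int L" "n \<le> L"
  shows "EQ r phi n \<longleftrightarrow> phi $ n = (-1)^n * (\<Sum>j=0..n. of_nat ((L - j) choose (n - j)) * phi $ j)"
proof -
  have "(of_int (-r) - of_nat j :: 'a) gchoose (n - j) = of_nat ((L - j) choose (n - j))" if "j \<le> n" for j
  proof -
    have "(of_int (-r) - of_nat j :: 'a) = of_nat (L - j)" using that assms by (simp add: of_nat_diff)
    then show ?thesis by (simp add: binomial_gbinomial)
  qed
  then show ?thesis unfolding EQ_def by (intro arg_cong2[where f="(=)"] refl arg_cong2[where f="(*)"] sum.cong) auto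
qed

lemma W_cond:
  fixes phi :: "'a::field_char_0 fps"
  assumes "r = - int L" "n \<le> L"
  shows "EQ r phi n \<longleftrightarrow> (Wp L phi - fps_exp (-1) * rfl (Wp L phi)) $ n = 0"
proof -
  have e: "(fps_exp (-1) * rfl (Wp L phi)) $ n
      = (-1)^n * (\<Sum>j=0..n. (fact (L - j) / fact (n - j)) * phi $ j)"
  proof -
    have "(fps_exp (-1) * rfl (Wp L phi)) $ n = (\<Sum>j=0..n. rfl (Wp L phi) $ j * fps_exp (-1) $ (n - j))"
      by (simp add: fps_mult_nth mult.commute[of "fps_exp (-1)"])
    also have "\<dots> = (\<Sum>j=0..n. (-1)^n * ((fact (L - j) / fact (n - j)) * phi $ j))"
    proof (intro sum.cong refl)
      fix j assume "j \<in> {0..n}"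
      then have jn: "j \<le> n" by simp
      then have "((-1::'a)^j) * (-1)^(n-j) = (-1)^n" by (simp add: neg1_pow_split[of j n])
      then show "rfl (Wp L phi) $ j * fps_exp (-1) $ (n - j) = (-1)^n * ((fact (L - j) / fact (n - j)) * phi $ j)"
        using jn assms by (simp add: Wp_nth field_simps)
    qed
    finally show ?thesis by (simp add: sum_distrib_left)
  qed
  have c: "fact (L - n) * (of_nat ((L - j) choose (n - j)) :: 'a) = fact (L - j) / fact (n - j)"
    if "j \<le> n" for j
  proof -
    have "L - j - (n - j) = L - n" using that assms by simp
    then show ?thesis using that assms by (simp add: binomial_fact)
  qed
  have fz: "(fact (L - n) :: 'a) \<noteq> 0" by simp
  have "EQ r phi n \<longleftrightarrow> fact (L - n) * phi $ n = fact (L - n) * ((-1)^n * (\<Sum>j=0..n. of_nat ((L - j) choose (n - j)) * phi $ j))"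
    using EQ_poly[OF assms] fz by simp
  also have "fact (L - n) * ((-1)^n * (\<Sum>j=0..n. of_nat ((L - j) choose (n - j)) * phi $ j))
      = (-1)^n * (\<Sum>j=0..n. (fact (L - n) * of_nat ((L - j) choose (n - j))) * phi $ j)"
    by (simp add: sum_distrib_left mult_ac)
  also have "\<dots> = (fps_exp (-1) * rfl (Wp L phi)) $ n"
    unfolding e by (intro arg_cong2[where f="(*)"] refl sum.cong) (simp add: c)
  finally show ?thesis using assms by (simp add: Wp_nth)
qed

lemma ev_rfl: "ev (rfl A) = ev A" by (rule fps_ext) simp
lemma od_rfl: "od (rfl A) = - od A" by (rule fps_ext) simp

lemma poly_fps:
  fixes phi :: "'a::field_char_0 fps"
  assumes "r = - int L"
  shows "(\<forall>n\<le>L. EQ r phi n) \<longleftrightarrow> (\<forall>m\<le>L. (fps_X * ev (Wp L phi) + 2 * EE * od (Wp L phi)) $ m = 0)"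
proof -
  let ?W = "Wp L phi"
  let ?Z = "?W - fps_exp (-1) * rfl ?W"
  have "(\<forall>n\<le>L. EQ r phi n) \<longleftrightarrow> (\<forall>n\<le>L. ?Z $ n = 0)"
    using W_cond[OF assms] by auto
  also have "\<dots> \<longleftrightarrow> (\<forall>n\<le>L. (ee * ?Z) $ n = 0)"
    by (rule low_unit[symmetric]) simp
  also have "ee * ?Z = ee * rfl (rfl ?W) - rfl ?W"
  proof -
    have "ee * ?Z = ee * ?W - (fps_exp (-1) * ee) * rfl ?W" by (simp add: algebra_simps)
    then show ?thesis by (simp add: exp_neg_mult)
  qed
  also have "(\<forall>n\<le>L. (ee * rfl (rfl ?W) - rfl ?W) $ n = 0)
      \<longleftrightarrow> (\<forall>n\<le>L. (Ber * (ee * rfl (rfl ?W) - rfl ?W)) $ n = 0)"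
    by (rule low_unit[symmetric]) (simp add: Ber0)
  also have "Ber * (ee * rfl (rfl ?W) - rfl ?W) = fps_X * ev ?W + 2 * EE * od ?W"
    unfolding Eq1 ev_rfl od_rfl by simp
  finally show ?thesis .
qed

definition PE :: "nat \<Rightarrow> 'a::field_char_0 fps \<Rightarrow> nat \<Rightarrow> bool" where
  "PE L phi m \<longleftrightarrow> fact (L - m + 1) * phi $ (m - 1)
     + 2 * (\<Sum>j=0..m. if odd j then Ber $ (m - j) * fact (L - j) * phi $ j else 0) = 0"

lemma poly_PE:
  fixes phi :: "'a::field_char_0 fps"
  assumes "m \<le> L"
  shows "(fps_X * ev (Wp L phi) + 2 * EE * od (Wp L phi)) $ m = 0 \<longleftrightarrow> (odd m \<longrightarrow> PE L phi m)"
proof -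
  let ?W = "Wp L phi"
  show ?thesis
  proof (cases "even m")
    case True
    then have a: "(fps_X * ev ?W) $ m = 0" by (cases m) auto
    have h: "EE $ (m - j) * od ?W $ j = 0" if "j \<in> {0..m}" for j
    proof (cases "odd j")
      case True
      with \<open>even m\<close> that have "odd (m - j)" by simp
      then show ?thesis by (simp add: EE_odd)
    qed simp
    have b: "(2 * EE * od ?W) $ m = 0"
      unfolding two_EE_nth using h by (simp add: sum.neutral del: od_nth)
    show ?thesis using a b True by (simp del: fps_X_mult_nth)
  next
    case False
    then obtain k where m: "m = Suc k" by (cases m) auto
    have e: "L - m + 1 = L - (m - 1)" using m assms by simp
    have a: "(fps_X * ev ?W) $ m = fact (L - m + 1) * phi $ (m - 1)"
      unfolding e using m False assms by (simp add: Wp_nth)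
    have b: "(2 * EE * od ?W) $ m = 2 * (\<Sum>j=0..m. if odd j then Ber $ (m - j) * fact (L - j) * phi $ j else 0)"
      unfolding two_EE_nth
    proof (intro arg_cong2[where f="(*)"] refl sum.cong)
      fix j assume "j \<in> {0..m}"
      then have jm: "j \<le> m" by simp
      show "EE $ (m - j) * od ?W $ j = (if odd j then Ber $ (m - j) * fact (L - j) * phi $ j else 0)"
      proof (cases "odd j")
        case True
        with \<open>odd m\<close> jm have "even (m - j)" by simp
        then show ?thesis using True jm assms by (simp add: EE_even Wp_nth mult_ac)
      qed simp
    qed
    show ?thesis unfolding fps_add_nth a b PE_def using False by simp
  qed
qed



lemma bern0: "bernoulli_num 0 = (1::'a::field_char_0)"
  by (simp add: bernoulli_num_Ber Ber0)

lemma star_TE: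
  fixes phi :: "'a::field_char_0 fps" and r k n :: int
  assumes k: "k = r div 2" and pos: "2*n + r \<ge> 1"
  shows "(coeff_int phi (2*n) = 2 / of_int (2*n + r) *
              (\<Sum>i\<in>{-k..n}. of_nat (nat (2*n + r) choose nat (2*i + r))
                   * bernoulli_num (nat (2*n - 2*i)) * coeff_int phi (2*i + 1)))
     \<longleftrightarrow> TE r phi (nat (2*n + r))"
proof -
  define M where "M = nat (2*n + r)"
  have Mi: "int M = 2*n + r" using pos by (simp add: M_def)
  let ?f = "\<lambda>j. of_nat (M choose j) * bernoulli_num (M - j) * coeff_int phi (int j + 1 - r) :: 'a"
  let ?h = "\<lambda>i::int. nat (2*i + r)"
  have set_eq: "{j\<in>{0..M}. even (int j - r)} = ?h ` {-k..n}"
  proof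
    show "{j\<in>{0..M}. even (int j - r)} \<subseteq> ?h ` {-k..n}"
    proof
      fix j assume "j \<in> {j\<in>{0..M}. even (int j - r)}"
      then have j: "j \<le> M" "even (int j - r)" by auto
      define i where "i = (int j - r) div 2"
      have i2: "2*i = int j - r" using j(2) by (simp add: i_def)
      have "i \<in> {-k..n}" using i2 j(1) Mi k by auto
      moreover have "j = ?h i" using i2 by simp
      ultimately show "j \<in> ?h ` {-k..n}" by blast
    qed
  next
    show "?h ` {-k..n} \<subseteq> {j\<in>{0..M}. even (int j - r)}"
    proof
      fix j assume "j \<in> ?h ` {-k..n}"
      then obtain i where i: "i \<in> {-k..n}" "j = ?h i" by blast
      have "2*i + r \<ge> 0" using i(1) k by auto
      then have "int j = 2*i + r" using i(2) by simp
      then show "j \<in> {j\<in>{0..M}. even (int j - r)}" using i(1) Mi by (auto; presburger)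
    qed
  qed
  have inj: "inj_on ?h {-k..n}"
  proof (rule inj_onI)
    fix a b assume "a \<in> {-k..n}" "b \<in> {-k..n}" "?h a = ?h b"
    moreover have "2*a + r \<ge> 0" "2*b + r \<ge> 0" using calculation(1,2) k by auto
    ultimately show "a = b" by simp
  qed
  have S: "(\<Sum>j=0..M. if even (int j - r) then ?f j else 0)
      = (\<Sum>i\<in>{-k..n}. of_nat (M choose nat (2*i + r))
                   * bernoulli_num (nat (2*n - 2*i)) * coeff_int phi (2*i + 1))"
  proof -
    have "(\<Sum>j=0..M. if even (int j - r) then ?f j else 0) = sum ?f {j\<in>{0..M}. even (int j - r)}"
      by (rule sum.inter_filter[symmetric]) simp
    also have "\<dots> = sum (?f \<circ> ?h) {-k..n}" unfolding set_eq by (rule sum.reindex[OF inj])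
    also have "\<dots> = (\<Sum>i\<in>{-k..n}. of_nat (M choose nat (2*i + r))
                   * bernoulli_num (nat (2*n - 2*i)) * coeff_int phi (2*i + 1))"
    proof (intro sum.cong refl)
      fix i assume i: "i \<in> {-k..n}"
      have h0: "2*i + r \<ge> 0" using i k by auto
      then have e: "M - nat (2*i + r) = nat (2*n - 2*i)" "int (nat (2*i + r)) + 1 - r = 2*i + 1"
        using i Mi by auto
      then show "(?f \<circ> ?h) i = of_nat (M choose nat (2*i + r))
                   * bernoulli_num (nat (2*n - 2*i)) * coeff_int phi (2*i + 1)"
        unfolding comp_def e(1) e(2) by simp
    qed
    finally show ?thesis .
  qed
  have c: "(of_int (2*n + r) :: 'a) \<noteq> 0"
  proof -
    have "2*n + r \<noteq> 0" using pos by simp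
    then show ?thesis using of_int_eq_0_iff by blast
  qed
  have Mr: "int M - r = 2*n" using Mi by simp
  have "TE r phi M \<longleftrightarrow> of_int (2*n + r) * coeff_int phi (2*n) = 2 * (\<Sum>i\<in>{-k..n}. of_nat (M choose nat (2*i + r))
                   * bernoulli_num (nat (2*n - 2*i)) * coeff_int phi (2*i + 1))"
  proof -
    have oM: "(of_nat M :: 'a) = of_int (2*n + r)" by (metis Mi of_int_of_nat_eq)
    show ?thesis unfolding TE_def S Mr oM ..
  qed
  also have "\<dots> \<longleftrightarrow> coeff_int phi (2*n) = 2 / of_int (2*n + r) * (\<Sum>i\<in>{-k..n}. of_nat (M choose nat (2*i + r))
                   * bernoulli_num (nat (2*n - 2*i)) * coeff_int phi (2*i + 1))"
    using c by (simp add: nonzero_eq_divide_eq mult.commute)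
  finally show ?thesis by (simp add: M_def)
qed

definition starF :: "'a::field_char_0 fps \<Rightarrow> int \<Rightarrow> int \<Rightarrow> int \<Rightarrow> bool" where
  "starF phi r k n \<longleftrightarrow> coeff_int phi (2*n) = 2 / of_int (2*n + r) *
              (\<Sum>i\<in>{-k..n}. of_nat (nat (2*n + r) choose nat (2*i + r))
                   * bernoulli_num (nat (2*n - 2*i)) * coeff_int phi (2*i + 1))"

lemma TE_0: "even r \<Longrightarrow> TE r phi 0 \<longleftrightarrow> coeff_int phi (1 - r) = (0::'a::field_char_0)"
  by (simp add: TE_def bern0)

lemma tailTE_star:
  fixes phi :: "'a::field_char_0 fps" and r k :: int
  assumes k: "k = r div 2"
  defines "n0 \<equiv> (if even r then max 0 (1 - k) else max 0 (- k))"
  shows "(\<forall>M. even (int M - r) \<longrightarrow> TE r phi M)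
     \<longleftrightarrow> ((\<forall>n. n \<ge> n0 \<longrightarrow> starF phi r k n) \<and> (even r \<and> r \<le> 0 \<longrightarrow> coeff_int phi (1 - r) = 0))"
proof
  assume H: "\<forall>M. even (int M - r) \<longrightarrow> TE r phi M"
  show "(\<forall>n. n \<ge> n0 \<longrightarrow> starF phi r k n) \<and> (even r \<and> r \<le> 0 \<longrightarrow> coeff_int phi (1 - r) = 0)"
  proof (intro conjI allI impI)
    fix n assume "n \<ge> n0"
    then have pos: "2*n + r \<ge> 1" unfolding n0_def k by (auto split: if_splits; presburger)
    then have "even (int (nat (2*n + r)) - r)" by simp
    then have "TE r phi (nat (2*n + r))" using H by blast
    then show "starF phi r k n" unfolding starF_def using star_TE[where phi=phi, OF k pos] by blast
  next
    assume "even r \<and> r \<le> 0"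
    then show "coeff_int phi (1 - r) = 0" using H[rule_format, of 0] TE_0[of r phi] by simp
  qed
next
  assume "(\<forall>n. n \<ge> n0 \<longrightarrow> starF phi r k n) \<and> (even r \<and> r \<le> 0 \<longrightarrow> coeff_int phi (1 - r) = 0)"
  then have S: "\<And>n. n \<ge> n0 \<Longrightarrow> starF phi r k n"
    and Z: "even r \<Longrightarrow> r \<le> 0 \<Longrightarrow> coeff_int phi (1 - r) = 0" by auto
  show "\<forall>M. even (int M - r) \<longrightarrow> TE r phi M"
  proof (intro allI impI)
    fix M assume ev: "even (int M - r)"
    show "TE r phi M"
    proof (cases "M = 0")
      case True
      then have "even r" using ev by simp
      moreover have "coeff_int phi (1 - r) = 0"
      proof (cases "r \<le> 0")
        case True then show ?thesis using Z \<open>even r\<close> by simp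
      next
        case False then show ?thesis using \<open>even r\<close> by (intro coeff_int_neg) presburger
      qed
      ultimately show ?thesis using TE_0[of r phi] True by simp
    next
      case False
      define n where "n = (int M - r) div 2"
      have n2: "2*n = int M - r" using ev by (simp add: n_def)
      have pos: "2*n + r \<ge> 1" using n2 False by simp
      have Mn: "nat (2*n + r) = M" using n2 by simp
      show ?thesis
      proof (cases "n \<ge> n0")
        case True
        then show ?thesis using S[OF True] star_TE[where phi=phi, OF k pos] Mn unfolding starF_def by simp
      next
        case False
        then have neg: "n < 0" using pos unfolding n0_def k by (auto split: if_splits; presburger)
        have "coeff_int phi (int M - r) = 0" using n2 neg by (simp add: coeff_int_neg)
        moreover have "(\<Sum>j=0..M. if even (int j - r) then of_nat (M choose j) * bernoulli_num (M - j)
            * coeff_int phi (int j + 1 - r) else 0) = (0::'a)"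
        proof (intro sum.neutral ballI)
          fix j assume "j \<in> {0..M}"
          then have "int j + 1 - r < 0" using n2 neg by auto
          then show "(if even (int j - r) then of_nat (M choose j) * bernoulli_num (M - j)
            * coeff_int phi (int j + 1 - r) else 0) = (0::'a)" by (simp add: coeff_int_neg)
        qed
        ultimately show ?thesis unfolding TE_def by simp
      qed
    qed
  qed
qed

definition ssF :: "'a::field_char_0 fps \<Rightarrow> int \<Rightarrow> int \<Rightarrow> bool" where
  "ssF phi r n \<longleftrightarrow> coeff_int phi (2*n) =
              (\<Sum>i\<in>{0..n}. 2 / of_int (2*i + r)
                   * of_nat (nat (- 2*i - r) choose nat (- 2*n - r))
                   * bernoulli_num (nat (2*n - 2*i)) * coeff_int phi (2*i + 1))"

lemma arith_ss0:
  fixes A F fb fc x :: "'a::field"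
  assumes "A \<noteq> 0" "fb \<noteq> 0" "fc \<noteq> 0"
  shows "fb * (2 / (- A) * (A * F / (fb * fc)) * (fc * x)) = - (2 * x * F)"
  using assms by (simp add: field_simps)

lemma arith_ss:
  fixes x :: "'a::field_char_0"
  assumes "a = b + c" "a \<ge> 1"
  shows "fact b * (2 / (- of_nat a) * of_nat (a choose b) * (fact c * x)) = - (2 * x * fact (a - 1))"
proof -
  have "of_nat (a choose b) = (fact a / (fact b * fact c) :: 'a)"
    using assms binomial_fact[of b a] by simp
  moreover have "(fact a :: 'a) = of_nat a * fact (a - 1)"
    by (rule fact_reduce) (use assms in arith)
  moreover have "(of_nat a :: 'a) \<noteq> 0"
  proof -
    have "a \<noteq> 0" using assms(2) by simp
    then show ?thesis by simp
  qed
  ultimately show ?thesis using arith_ss0[of "of_nat a" "fact b" "fact c" "fact (a - 1)" x] by simp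
qed

lemma sum_odd_reindex:
  fixes nn :: nat shows "(\<Sum>j=0..2*nn+1. if odd j then g j else (0::'a::comm_monoid_add)) = (\<Sum>i=0..nn. g (2*i+1))"
proof -
  have "(\<Sum>j=0..2*nn+1. if odd j then g j else 0) = sum g {j\<in>{0..2*nn+1}. odd j}"
    by (rule sum.inter_filter[symmetric]) simp
  also have "{j\<in>{0..2*nn+1}. odd j} = (\<lambda>i. 2*i+1) ` {0..nn}"
  proof
    show "{j\<in>{0..2*nn+1}. odd j} \<subseteq> (\<lambda>i. 2*i+1) ` {0..nn}"
    proof
      fix j assume "j \<in> {j\<in>{0..2*nn+1}. odd j}"
      then have "odd j" "j \<le> 2*nn+1" by auto
      then have "j = 2*(j div 2)+1" "j div 2 \<le> nn" by (simp, linarith)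
      then show "j \<in> (\<lambda>i. 2*i+1) ` {0..nn}" by auto
    qed
  qed auto
  also have "sum g ((\<lambda>i. 2*i+1) ` {0..nn}) = (\<Sum>i=0..nn. g (2*i+1))"
    by (rule sum.reindex_cong[where l="\<lambda>i. 2*i+1"]) (auto simp: inj_on_def)
  finally show ?thesis .
qed

lemma sum_int_nat: "(\<Sum>i\<in>{0..int nn}. f i) = (\<Sum>i=0..nn. f (int i))"
  by (rule sum.reindex_bij_witness[where i=int and j=nat]) auto

lemma PE_ss:
  fixes phi :: "'a::field_char_0 fps"
  assumes r: "r = - int L" and m: "2*nn + 1 \<le> L"
  shows "PE L phi (2*nn+1) \<longleftrightarrow> ssF phi r (int nn)"
proof -
  let ?T = "\<lambda>i::int. 2 / of_int (2*i + r)
                   * of_nat (nat (- 2*i - r) choose nat (- 2*int nn - r))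
                   * bernoulli_num (nat (2*int nn - 2*i)) * coeff_int phi (2*i + 1) :: 'a"
  have t: "fact (L - 2*nn) * ?T (int i) = - (2 * Ber $ (2*nn+1 - (2*i+1)) * fact (L - (2*i+1)) * phi $ (2*i+1))"
    if "i \<le> nn" for i
  proof -
    have e1: "nat (- 2 * int i - r) = L - 2*i" "nat (- 2*int nn - r) = L - 2*nn"
      "nat (2*int nn - 2*int i) = 2*nn - 2*i" "2*nn+1 - (2*i+1) = 2*nn - 2*i"
      "L - (2*i+1) = (L - 2*i) - 1"
      using that m r by auto
    have e2: "(of_int (2*int i + r) :: 'a) = - of_nat (L - 2*i)"
      using that m r by (simp add: of_nat_diff)
    have e3: "coeff_int phi (2*int i + 1) = phi $ (2*i+1)"
    proof -
      have "2*int i + 1 = int (2*i+1)" by simp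
      then show ?thesis by (simp only: coeff_int_nat)
    qed
    have "fact (L - 2*nn) * ?T (int i)
        = fact (L - 2*nn) * (2 / (- of_nat (L - 2*i)) * of_nat ((L - 2*i) choose (L - 2*nn))
            * (fact (2*nn - 2*i) * (Ber $ (2*nn - 2*i) * phi $ (2*i+1))))"
      unfolding e1 e2 e3 by (simp add: bernoulli_num_Ber mult_ac)
    also have "\<dots> = - (2 * (Ber $ (2*nn - 2*i) * phi $ (2*i+1)) * fact (L - 2*i - 1))"
      by (rule arith_ss) (use that m in auto)
    finally show ?thesis unfolding e1 by (simp add: mult_ac)
  qed
  have f0: "(fact (L - 2*nn) :: 'a) \<noteq> 0" by simp
  have L1: "L - (2*nn+1) + 1 = L - 2*nn" using m by simp
  have "PE L phi (2*nn+1) \<longleftrightarrow> fact (L - 2*nn) * phi $ (2*nn)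
      + 2 * (\<Sum>i=0..nn. Ber $ (2*nn+1 - (2*i+1)) * fact (L - (2*i+1)) * phi $ (2*i+1)) = 0"
    unfolding PE_def L1 sum_odd_reindex[where g="\<lambda>j. Ber $ (2*nn+1 - j) * fact (L - j) * phi $ j"]
    by simp
  also have "2 * (\<Sum>i=0..nn. Ber $ (2*nn+1 - (2*i+1)) * fact (L - (2*i+1)) * phi $ (2*i+1))
      = - (fact (L - 2*nn) * (\<Sum>i=0..nn. ?T (int i)))"
  proof -
    have "(\<Sum>i=0..nn. 2 * (Ber $ (2*nn+1 - (2*i+1)) * fact (L - (2*i+1)) * phi $ (2*i+1)))
        = (\<Sum>i=0..nn. - (fact (L - 2*nn) * ?T (int i)))"
    proof (intro sum.cong refl)
      fix i assume "i \<in> {0..nn}"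
      then show "2 * (Ber $ (2*nn+1 - (2*i+1)) * fact (L - (2*i+1)) * phi $ (2*i+1))
        = - (fact (L - 2*nn) * ?T (int i))" using t[of i] by (simp add: mult_ac)
    qed
    then show ?thesis by (simp add: sum_distrib_left sum_negf del: of_nat_add of_nat_mult)
  qed
  also have "(fact (L - 2*nn) * phi $ (2*nn) + - (fact (L - 2*nn) * (\<Sum>i=0..nn. ?T (int i))) = 0)
      \<longleftrightarrow> phi $ (2*nn) = (\<Sum>i=0..nn. ?T (int i))"
  proof -
    have "fact (L - 2*nn) * phi $ (2*nn) + - (fact (L - 2*nn) * (\<Sum>i=0..nn. ?T (int i)))
        = fact (L - 2*nn) * (phi $ (2*nn) - (\<Sum>i=0..nn. ?T (int i)))"
      by (simp add: right_diff_distrib)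
    then show ?thesis using f0 by simp
  qed
  also have "\<dots> \<longleftrightarrow> ssF phi r (int nn)"
  proof -
    have "coeff_int phi (2 * int nn) = phi $ (2*nn)"
    proof -
      have "2*int nn = int (2*nn)" by simp
      then show ?thesis by (simp only: coeff_int_nat)
    qed
    then show ?thesis unfolding ssF_def sum_int_nat by simp
  qed
  finally show ?thesis .
qed

lemma polyPE_ss:
  fixes phi :: "'a::field_char_0 fps"
  assumes r: "r \<le> 0" and L: "L = nat (- r)" and k: "k = r div 2"
  shows "(\<forall>m\<le>L. odd m \<longrightarrow> PE L phi m) \<longleftrightarrow> (\<forall>n. 0 \<le> n \<and> n \<le> - k - 1 \<longrightarrow> ssF phi r n)"
proof
  assume H: "\<forall>m\<le>L. odd m \<longrightarrow> PE L phi m"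
  show "\<forall>n. 0 \<le> n \<and> n \<le> - k - 1 \<longrightarrow> ssF phi r n"
  proof (intro allI impI)
    fix n assume n: "0 \<le> n \<and> n \<le> - k - 1"
    define nn where "nn = nat n"
    have nn: "int nn = n" using n by (simp add: nn_def)
    have "int (2*nn + 1) \<le> - r" using n nn k by (simp; presburger)
    then have m: "2*nn + 1 \<le> L" using L by simp
    have "PE L phi (2*nn+1)" using H m by simp
    then show "ssF phi r n" using PE_ss[OF _ m, of r phi] L r nn by simp
  qed
next
  assume H: "\<forall>n. 0 \<le> n \<and> n \<le> - k - 1 \<longrightarrow> ssF phi r n"
  show "\<forall>m\<le>L. odd m \<longrightarrow> PE L phi m"
  proof (intro allI impI)
    fix m assume m: "m \<le> L" "odd m"
    define nn where "nn = m div 2"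
    have mm: "m = 2*nn + 1" using m(2) by (simp add: nn_def)
    have "int m \<le> - r" using m(1) L r by simp
    then have "int nn \<le> - k - 1" using mm k by (simp; presburger)
    then have "ssF phi r (int nn)" using H by simp
    then show "PE L phi m" using PE_ss[of r L nn phi] mm m(1) L r by simp
  qed
qed

lemma main_char:
  fixes phi :: "'a::field_char_0 fps"
  shows "in_F r phi \<longleftrightarrow> (\<forall>M. even (int M - r) \<longrightarrow> TE r phi M)
     \<and> (r \<le> 0 \<longrightarrow> (\<forall>m\<le>nat (- r). odd m \<longrightarrow> PE (nat (- r)) phi m))"
proof -
  have split: "(\<forall>n. EQ r phi n) \<longleftrightarrow> (\<forall>n. int n \<ge> 1 - r \<longrightarrow> EQ r phi n) \<and> (\<forall>n. int n \<le> - r \<longrightarrow> EQ r phi n)"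
  proof
    assume h: "\<forall>n. EQ r phi n"
    then show "(\<forall>n. int n \<ge> 1 - r \<longrightarrow> EQ r phi n) \<and> (\<forall>n. int n \<le> - r \<longrightarrow> EQ r phi n)" by simp
  next
    assume h: "(\<forall>n. int n \<ge> 1 - r \<longrightarrow> EQ r phi n) \<and> (\<forall>n. int n \<le> - r \<longrightarrow> EQ r phi n)"
    show "\<forall>n. EQ r phi n"
    proof
      fix n
      show "EQ r phi n"
      proof (cases "int n \<ge> 1 - r")
        case True then show ?thesis using h by simp
      next
        case False then have "int n \<le> - r" by linarith
        then show ?thesis using h by simp
      qed
    qed
  qed
  have T: "(\<forall>n. int n \<ge> 1 - r \<longrightarrow> EQ r phi n) \<longleftrightarrow> (\<forall>M. even (int M - r) \<longrightarrow> TE r phi M)"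
    unfolding tail_all tail_fps_parts parts_TE ..
  have P: "(\<forall>n. int n \<le> - r \<longrightarrow> EQ r phi n)
      \<longleftrightarrow> (r \<le> 0 \<longrightarrow> (\<forall>m\<le>nat (- r). odd m \<longrightarrow> PE (nat (- r)) phi m))"
  proof (cases "r \<le> 0")
    case True
    define L where "L = nat (- r)"
    have rL: "r = - int L" using True by (simp add: L_def)
    have "(\<forall>n. int n \<le> - r \<longrightarrow> EQ r phi n) \<longleftrightarrow> (\<forall>n\<le>L. EQ r phi n)"
      using rL by simp
    also have "\<dots> \<longleftrightarrow> (\<forall>m\<le>L. (fps_X * ev (Wp L phi) + 2 * EE * od (Wp L phi)) $ m = 0)"
      by (rule poly_fps[OF rL])
    also have "\<dots> \<longleftrightarrow> (\<forall>m\<le>L. odd m \<longrightarrow> PE L phi m)"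
    proof (intro iff_allI)
      fix m
      have hh: "m \<le> L \<Longrightarrow> ((fps_X * ev (Wp L phi) + 2 * EE * od (Wp L phi)) $ m = 0) = (odd m \<longrightarrow> PE L phi m)"
        by (rule poly_PE)
      show "(m \<le> L \<longrightarrow> (fps_X * ev (Wp L phi) + 2 * EE * od (Wp L phi)) $ m = 0) = (m \<le> L \<longrightarrow> odd m \<longrightarrow> PE L phi m)"
        using hh by blast
    qed
    finally show ?thesis using True by (simp add: L_def)
  next
    case False
    then show ?thesis by simp
  qed
  show ?thesis unfolding inF_EQ split T P ..
qed



theorem theorem5p9:
  fixes phi :: "'a::field_char_0 fps" and r :: int
  defines "\<gamma> \<equiv> coeff_int phi"
  defines "star \<equiv> (\<lambda>k n::int. \<gamma> (2*n) =
              2 / of_int (2*n + r) *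
              (\<Sum>i\<in>{-k..n}. of_nat (nat (2*n + r) choose nat (2*i + r))
                   * bernoulli_num (nat (2*n - 2*i)) * \<gamma> (2*i + 1)))"
  defines "starstar \<equiv> (\<lambda>n::int. \<gamma> (2*n) =
              (\<Sum>i\<in>{0..n}. 2 / of_int (2*i + r)
                   * of_nat (nat (- 2*i - r) choose nat (- 2*n - r))
                   * bernoulli_num (nat (2*n - 2*i)) * \<gamma> (2*i + 1)))"
  shows "in_F r phi \<longleftrightarrow>
    (if even r then
       (let k = r div 2 in
          (\<forall>n. n \<ge> max 0 (1 - k) \<longrightarrow> star k n)
        \<and> (r \<le> 0 \<longrightarrow> \<gamma> (1 - r) = 0)
        \<and> (r < 0 \<longrightarrow> (\<forall>n. 0 \<le> n \<and> n \<le> - k - 1 \<longrightarrow> starstar n)))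
     else
       (let k = (r - 1) div 2 in
          (\<forall>n. n \<ge> max 0 (- k) \<longrightarrow> star k n)
        \<and> (r < 0 \<longrightarrow> (\<forall>n. 0 \<le> n \<and> n \<le> - k - 1 \<longrightarrow> starstar n))))"
proof -
  have s1: "star = starF phi r" unfolding star_def \<gamma>_def by (intro ext) (simp only: starF_def)
  have s2: "starstar = ssF phi r" unfolding starstar_def \<gamma>_def by (intro ext) (simp only: ssF_def)
  define k where "k = r div 2"
  define n0 where "n0 = (if even r then max 0 (1 - k) else max 0 (- k))"
  have TS: "(\<forall>M. even (int M - r) \<longrightarrow> TE r phi M)
     \<longleftrightarrow> ((\<forall>n. n \<ge> n0 \<longrightarrow> starF phi r k n) \<and> (even r \<and> r \<le> 0 \<longrightarrow> coeff_int phi (1 - r) = 0))"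
    unfolding n0_def by (rule tailTE_star) (simp add: k_def)
  have PS: "(r \<le> 0 \<longrightarrow> (\<forall>m\<le>nat (- r). odd m \<longrightarrow> PE (nat (- r)) phi m))
      \<longleftrightarrow> (r < 0 \<longrightarrow> (\<forall>n. 0 \<le> n \<and> n \<le> - k - 1 \<longrightarrow> ssF phi r n))"
  proof (cases "r \<le> 0")
    case True
    have e: "(\<forall>m\<le>nat (- r). odd m \<longrightarrow> PE (nat (- r)) phi m) \<longleftrightarrow> (\<forall>n. 0 \<le> n \<and> n \<le> - k - 1 \<longrightarrow> ssF phi r n)"
      by (rule polyPE_ss[OF True refl]) (simp add: k_def)
    show ?thesis
    proof (cases "r = 0")
      case True
      then have "k = 0" by (simp add: k_def)
      then show ?thesis using e True by auto
    next
      case False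
      then show ?thesis using e \<open>r \<le> 0\<close> by auto
    qed
  next
    case False
    then show ?thesis by simp
  qed
  have odd_k: "odd r \<Longrightarrow> (r - 1) div 2 = k" unfolding k_def by presburger
  show ?thesis
    unfolding s1 s2 main_char TS PS \<gamma>_def
    using odd_k by (auto simp: Let_def n0_def k_def)
qed


end
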